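(* Let $\bar M$ be an upper bound on the optimal value $M_{adj}=\min_{\sigma\in\Sigma}Q_\Gamma(\sigma)$ of the Adjustable-Robust RCPSP (for instance $\bar M=\sum_{i\in J}(p_i+\hat d_i)$), where $Q_\Gamma(\sigma)=\max_{\delta\in\Delta}\min\{x_t:x\text{ schedule of }(\bar J,A_\sigma,p+\delta)\}$ (with value $+\infty$ if no schedule exists). Consider the mixed-integer program $(F_{adj})$ with variables $\sigma\in\{0,1\}^P$, $f=(f^k_{ij})\ge 0$, and $x^\gamma_j\ge 0$ for $j\in\bar J,\gamma\in\{0,\dots,\Gamma\}$: minimize $x^\Gamma_t$ subject to (i) $x^\gamma_j-x^\gamma_i\ge p_i-\bar M(1-\sigma_{ij})$ for all $(i,j)\in P$, $\gamma\le\Gamma$; (ii) $x^\gamma_j-x^{\gamma+1}_i\ge p_i+\hat d_i-\bar M(1-\sigma_{ij})$ for all $(i,j)\in P$, $\gamma<\Gamma$; (iii) $x^\Gamma_t-x^\gamma_t\ge 0$ for all $\gamma<\Gamma$; together with the flow constraints (F) on $(\sigma,f)$. Then the optimal value of $(F_{adj})$ equals $M_{adj}$, and for any optimal solution $(\sigma,f,x)$ of $(F_{adj})$, $\sigma$ is an optimal sequencing decision of the Adjustable-Robust RCPSP, i.e., $Q_\Gamma(\sigma)=M_{adj}$.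
   Context: Jobs form a finite set $J$; $\bar J=J\cup\{s,t\}$. $(\bar J,A)$ is a directed acyclic precedence graph with unique source $s$ and unique sink $t$, every vertex on an $s$–$t$ path. Processing times $p\in\mathbb{R}_{>0}^J$, $p_s=p_t=0$; for $\delta\in\mathbb{R}_+^J$ set $\delta_s=\delta_t=0$, and $\hat d_s=\hat d_t=0$. A schedule of $(\bar J,E,q)$ is $x\in\mathbb{R}_+^{\bar J}$ with $x_j-x_i\ge q_i$ for all $(i,j)\in E$; its makespan is $x_t$. Resources $\mathcal R$, requirements $r_{ik}\ge0$, availabilities $R_k\ge0$, $\tilde r_{ik}=R_k$ if $i\in\{s,t\}$ else $r_{ik}$. $P=\{(i,j):i,j\in\bar J,i\ne j\}$. Flow constraints (F) on $(\sigma,f)$ with $f\ge 0$: $\sigma_{ij}=1$ for all $(i,j)\in A$; $f^k_{ij}\le\min\{\tilde r_{ik},\tilde r_{jk}\}\sigma_{ij}$ for all $(i,j)\in P,k\in\mathcal R$; $\sum_{j:(i,j)\in P}f^k_{ij}=\tilde r_{ik}$ for all $k$, $i\in J\cup\{s\}$; $\sum_{j:(j,i)\in P}f^k_{ji}=\tilde r_{ik}$ for all $k$, $i\in J\cup\{t\}$. $\Sigma$ is the set of $\sigma\in\{0,1\}^P$ for which some $f\ge0$ satisfies (F). $A_\sigma=\{(i,j)\in P:\sigma_{ij}=1\}$. $\Delta=\{(\hat d_iu_i)_{i\in J}:u\in\{0,1\}^J,\sum_iu_i\le\Gamma\}$ for given $\hat d\in\mathbb{R}_+^J$ and integer $\Gamma\ge0$.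 *)

theory Defs
  imports Complex_Main "HOL-Library.Extended_Real"
begin

text \<open>Jobs have type 'a, resources type 'r. Vectors indexed by a finite set
 are represented as functions; 0/1-vectors sigma on P are real-valued functions
 with values in {0,1} on P and 0 outside P.\<close>

definition Jbar :: "'a set \<Rightarrow> 'a \<Rightarrow> 'a \<Rightarrow> 'a set" where
  "Jbar J s t = J \<union> {s, t}"

definition Ppairs :: "'a set \<Rightarrow> ('a \<times> 'a) set" where
  "Ppairs Jb = {(i, j). i \<in> Jb \<and> j \<in> Jb \<and> i \<noteq> j}"

definition rtil :: "'a \<Rightarrow> 'a \<Rightarrow> ('r \<Rightarrow> real) \<Rightarrow> ('a \<Rightarrow> 'r \<Rightarrow> real) \<Rightarrow> 'a \<Rightarrow> 'r \<Rightarrow> real" where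
  "rtil s t R r i k = (if i = s \<or> i = t then R k else r i k)"

definition flow_ok ::
  "'a set \<Rightarrow> 'a \<Rightarrow> 'a \<Rightarrow> ('a \<times> 'a) set \<Rightarrow> 'r set \<Rightarrow> ('a \<Rightarrow> 'r \<Rightarrow> real) \<Rightarrow> ('r \<Rightarrow> real)
    \<Rightarrow> ('a \<times> 'a \<Rightarrow> real) \<Rightarrow> ('r \<Rightarrow> 'a \<times> 'a \<Rightarrow> real) \<Rightarrow> bool" where
  "flow_ok J s t A Res r R \<sigma> f \<longleftrightarrow>
     (let P = Ppairs (Jbar J s t); rt = rtil s t R r in
       (\<forall>e\<in>A. \<sigma> e = 1) \<and>
       (\<forall>(i, j)\<in>P. \<forall>k\<in>Res. 0 \<le> f k (i, j) \<and> f k (i, j) \<le> min (rt i k) (rt j k) * \<sigma> (i, j)) \<and>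
       (\<forall>k\<in>Res. \<forall>i\<in>J \<union> {s}. (\<Sum>j\<in>{j. (i, j) \<in> P}. f k (i, j)) = rt i k) \<and>
       (\<forall>k\<in>Res. \<forall>i\<in>J \<union> {t}. (\<Sum>j\<in>{j. (j, i) \<in> P}. f k (j, i)) = rt i k))"

definition binary_on :: "('a \<times> 'a) set \<Rightarrow> ('a \<times> 'a \<Rightarrow> real) \<Rightarrow> bool" where
  "binary_on P \<sigma> \<longleftrightarrow> (\<forall>e\<in>P. \<sigma> e \<in> {0, 1}) \<and> (\<forall>e. e \<notin> P \<longrightarrow> \<sigma> e = 0)"

definition SigmaSet ::
  "'a set \<Rightarrow> 'a \<Rightarrow> 'a \<Rightarrow> ('a \<times> 'a) set \<Rightarrow> 'r set \<Rightarrow> ('a \<Rightarrow> 'r \<Rightarrow> real) \<Rightarrow> ('r \<Rightarrow> real)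
    \<Rightarrow> ('a \<times> 'a \<Rightarrow> real) set" where
  "SigmaSet J s t A Res r R =
     {\<sigma>. binary_on (Ppairs (Jbar J s t)) \<sigma> \<and> (\<exists>f. flow_ok J s t A Res r R \<sigma> f)}"

definition A_of :: "('a \<times> 'a) set \<Rightarrow> ('a \<times> 'a \<Rightarrow> real) \<Rightarrow> ('a \<times> 'a) set" where
  "A_of P \<sigma> = {e \<in> P. \<sigma> e = 1}"

definition is_schedule :: "'a set \<Rightarrow> ('a \<times> 'a) set \<Rightarrow> ('a \<Rightarrow> real) \<Rightarrow> ('a \<Rightarrow> real) \<Rightarrow> bool" where
  "is_schedule Jb E q x \<longleftrightarrow> (\<forall>j\<in>Jb. 0 \<le> x j) \<and> (\<forall>(i, j)\<in>E. x j - x i \<ge> q i)"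

definition Delta :: "'a set \<Rightarrow> ('a \<Rightarrow> real) \<Rightarrow> nat \<Rightarrow> ('a \<Rightarrow> real) set" where
  "Delta J dhat \<Gamma> =
     {(\<lambda>i. if i \<in> J then dhat i * real (u i) else 0) | u.
        (\<forall>i\<in>J. u i \<in> {0, 1}) \<and> (\<Sum>i\<in>J. u i) \<le> \<Gamma>}"

definition Q_Gamma ::
  "'a set \<Rightarrow> 'a \<Rightarrow> 'a \<Rightarrow> ('a \<Rightarrow> real) \<Rightarrow> ('a \<Rightarrow> real) \<Rightarrow> nat \<Rightarrow> ('a \<times> 'a \<Rightarrow> real) \<Rightarrow> ereal" where
  "Q_Gamma J s t p dhat \<Gamma> \<sigma> =
     (SUP \<delta>\<in>Delta J dhat \<Gamma>.
        Inf {ereal (x t) | x. is_schedule (Jbar J s t) (A_of (Ppairs (Jbar J s t)) \<sigma>) (\<lambda>i. p i + \<delta> i) x})"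

definition M_adj ::
  "'a set \<Rightarrow> 'a \<Rightarrow> 'a \<Rightarrow> ('a \<times> 'a) set \<Rightarrow> 'r set \<Rightarrow> ('a \<Rightarrow> 'r \<Rightarrow> real) \<Rightarrow> ('r \<Rightarrow> real)
    \<Rightarrow> ('a \<Rightarrow> real) \<Rightarrow> ('a \<Rightarrow> real) \<Rightarrow> nat \<Rightarrow> ereal" where
  "M_adj J s t A Res r R p dhat \<Gamma> =
     (INF \<sigma>\<in>SigmaSet J s t A Res r R. Q_Gamma J s t p dhat \<Gamma> \<sigma>)"

definition Fadj_feasible ::
  "'a set \<Rightarrow> 'a \<Rightarrow> 'a \<Rightarrow> ('a \<times> 'a) set \<Rightarrow> 'r set \<Rightarrow> ('a \<Rightarrow> 'r \<Rightarrow> real) \<Rightarrow> ('r \<Rightarrow> real)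
    \<Rightarrow> ('a \<Rightarrow> real) \<Rightarrow> ('a \<Rightarrow> real) \<Rightarrow> nat \<Rightarrow> real
    \<Rightarrow> ('a \<times> 'a \<Rightarrow> real) \<Rightarrow> ('r \<Rightarrow> 'a \<times> 'a \<Rightarrow> real) \<Rightarrow> (nat \<Rightarrow> 'a \<Rightarrow> real) \<Rightarrow> bool" where
  "Fadj_feasible J s t A Res r R p dhat \<Gamma> Mbar \<sigma> f x \<longleftrightarrow>
     (let Jb = Jbar J s t; P = Ppairs Jb in
       binary_on P \<sigma> \<and>
       flow_ok J s t A Res r R \<sigma> f \<and>
       (\<forall>\<gamma>\<le>\<Gamma>. \<forall>j\<in>Jb. 0 \<le> x \<gamma> j) \<and>
       (\<forall>(i, j)\<in>P. \<forall>\<gamma>\<le>\<Gamma>. x \<gamma> j - x \<gamma> i \<ge> p i - Mbar * (1 - \<sigma> (i, j))) \<and>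
       (\<forall>(i, j)\<in>P. \<forall>\<gamma><\<Gamma>. x \<gamma> j - x (Suc \<gamma>) i \<ge> p i + dhat i - Mbar * (1 - \<sigma> (i, j))) \<and>
       (\<forall>\<gamma><\<Gamma>. x \<Gamma> t - x \<gamma> t \<ge> 0))"

end

theory Submission
  imports Defs
begin

lemma chain_ge:
  fixes w c :: "'a \<Rightarrow> real"
  assumes e: "\<And>a b. (a,b)\<in>E \<Longrightarrow> w a + c a \<le> w b"
    and nn: "\<And>a b. (a,b)\<in>E \<Longrightarrow> 0 \<le> c a"
    and ab: "(a,b) \<in> E\<^sup>+"
  shows "w a + c a \<le> w b"
  using ab
proof (induction rule: trancl_induct)
  case (base y) then show ?case using e by blast
next
  case (step y z)
  have "w y + c y \<le> w z" "0 \<le> c y" using e[OF step(2)] nn[OF step(2)] by auto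
  then show ?case using step(3) by linarith
qed

definition ES :: "'a set \<Rightarrow> ('a \<times> 'a) set \<Rightarrow> ('a \<Rightarrow> real) \<Rightarrow> 'a \<Rightarrow> real" where
  "ES Jb E q j = (if j \<in> Jb then Inf {x j |x. is_schedule Jb E q x} else 0)"

lemma ES_le:
  assumes "j \<in> Jb" "is_schedule Jb E q y"
  shows "ES Jb E q j \<le> y j"
proof -
  have "bdd_below {x j |x. is_schedule Jb E q x}"
    using assms(1) by (auto simp: bdd_below_def is_schedule_def)
  then show ?thesis using assms unfolding ES_def by (auto intro!: cInf_lower)
qed

lemma ES_sched:
  assumes sub: "E \<subseteq> Jb \<times> Jb" and ex: "\<exists>x. is_schedule Jb E q x"
  shows "is_schedule Jb E q (ES Jb E q)"
proof -
  have ne: "{x j |x. is_schedule Jb E q x} \<noteq> {}" for j using ex by auto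
  have nn: "0 \<le> ES Jb E q j" if "j \<in> Jb" for j
  proof -
    have "0 \<le> Inf {x j |x. is_schedule Jb E q x}"
      using that by (intro cInf_greatest[OF ne]) (auto simp: is_schedule_def)
    then show ?thesis using that by (simp add: ES_def)
  qed
  have edge: "ES Jb E q i + q i \<le> ES Jb E q j" if "(i,j)\<in>E" for i j
  proof -
    have ij: "i \<in> Jb" "j \<in> Jb" using that sub by auto
    have "ES Jb E q i + q i \<le> y" if "y \<in> {x j |x. is_schedule Jb E q x}" for y
    proof -
      obtain x where x: "is_schedule Jb E q x" "y = x j" using \<open>y \<in> _\<close> by auto
      have "ES Jb E q i \<le> x i" using ES_le[OF ij(1) x(1)] .
      moreover have "x j - x i \<ge> q i" using x(1) \<open>(i,j)\<in>E\<close> unfolding is_schedule_def by auto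
      ultimately show ?thesis using x(2) by linarith
    qed
    then have "ES Jb E q i + q i \<le> Inf {x j |x. is_schedule Jb E q x}"
      by (intro cInf_greatest[OF ne]) 
    then show ?thesis using ij(2) by (simp add: ES_def)
  qed
  show ?thesis unfolding is_schedule_def using nn edge by force
qed

lemma ES_ereal:
  assumes sub: "E \<subseteq> Jb \<times> Jb" and ex: "\<exists>x. is_schedule Jb E q x" and j: "j \<in> Jb"
  shows "Inf {ereal (x j) |x. is_schedule Jb E q x} = ereal (ES Jb E q j)"
proof (rule antisym)
  show "Inf {ereal (x j) |x. is_schedule Jb E q x} \<le> ereal (ES Jb E q j)"
    using ES_sched[OF sub ex] by (auto intro!: Inf_lower)
  show "ereal (ES Jb E q j) \<le> Inf {ereal (x j) |x. is_schedule Jb E q x}"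
    using ES_le[OF j] by (auto intro!: Inf_greatest)
qed

locale frame =
  fixes J :: "'a set" and s t :: 'a and A :: "('a \<times> 'a) set"
    and Res :: "'r set" and r :: "'a \<Rightarrow> 'r \<Rightarrow> real" and R :: "'r \<Rightarrow> real"
    and p dhat :: "'a \<Rightarrow> real" and \<Gamma> :: nat and Mbar :: real
  assumes finJ: "finite J" and sJ: "s \<notin> J" and tJ: "t \<notin> J" and st: "s \<noteq> t"
    and A_sub: "A \<subseteq> Jbar J s t \<times> Jbar J s t"
    and acyc: "acyclic A"
    and on_path: "\<forall>j\<in>Jbar J s t. (s, j) \<in> A\<^sup>* \<and> (j, t) \<in> A\<^sup>*"
    and p_pos: "\<forall>i\<in>J. p i > 0" and p_s: "p s = 0" and p_t: "p t = 0"
    and dhat_nn: "\<forall>i\<in>J. dhat i \<ge> 0" and dhat_s: "dhat s = 0" and dhat_t: "dhat t = 0"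
begin

abbreviation "Jb \<equiv> Jbar J s t"
abbreviation "PP \<equiv> Ppairs (Jbar J s t)"
abbreviation "EE \<sigma> \<equiv> A_of (Ppairs (Jbar J s t)) \<sigma>"

lemma Jb_fin: "finite Jb" using finJ by (simp add: Jbar_def)

lemma Jb_cases: "i \<in> Jb \<longleftrightarrow> i \<in> J \<or> i = s \<or> i = t" by (auto simp: Jbar_def)

lemma s_in: "s \<in> Jb" and t_in: "t \<in> Jb" by (auto simp: Jbar_def)

lemma E_sub: "EE \<sigma> \<subseteq> Jb \<times> Jb" by (auto simp: A_of_def Ppairs_def)

lemma E_P: "e \<in> EE \<sigma> \<longleftrightarrow> e \<in> PP \<and> \<sigma> e = 1" by (auto simp: A_of_def)

lemma P_fin: "finite PP"
proof -
  have "PP \<subseteq> Jb \<times> Jb" by (auto simp: Ppairs_def)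
  then show ?thesis using Jb_fin finite_subset by blast
qed

lemma p_nn: "i \<in> Jb \<Longrightarrow> 0 \<le> p i"
  using p_pos p_s p_t by (auto simp: Jb_cases intro: less_imp_le)

lemma dhat_nn': "i \<in> Jb \<Longrightarrow> 0 \<le> dhat i"
  using dhat_nn dhat_s dhat_t by (auto simp: Jb_cases)

lemma Delta_mem: "\<delta> \<in> Delta J dhat k \<Longrightarrow> \<exists>u. (\<forall>i\<in>J. u i \<in> {0, 1}) \<and> (\<Sum>i\<in>J. u i) \<le> k \<and>
   \<delta> = (\<lambda>i. if i \<in> J then dhat i * real (u i) else 0)"
  by (auto simp: Delta_def)

lemma delta_nn: "\<delta> \<in> Delta J dhat k \<Longrightarrow> 0 \<le> \<delta> i"
  using dhat_nn by (auto simp: Delta_def)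

lemma delta_st: "\<delta> \<in> Delta J dhat k \<Longrightarrow> \<delta> s = 0 \<and> \<delta> t = 0"
  using sJ tJ by (auto simp: Delta_def)

lemma Delta_mono: "k \<le> k' \<Longrightarrow> Delta J dhat k \<subseteq> Delta J dhat k'"
  by (auto simp: Delta_def)

lemma zero_Delta: "(\<lambda>i. 0) \<in> Delta J dhat k"
proof -
  have "(\<lambda>i. 0::real) = (\<lambda>i. if i \<in> J then dhat i * real ((\<lambda>_. 0::nat) i) else 0)" by auto
  moreover have "(\<forall>i\<in>J. (\<lambda>_. 0::nat) i \<in> {0, 1}) \<and> (\<Sum>i\<in>J. (\<lambda>_. 0::nat) i) \<le> k" by simp
  ultimately show ?thesis unfolding Delta_def by (intro CollectI exI[of _ "\<lambda>_. 0::nat"]) simp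
qed

lemma bump:
  assumes d: "\<delta> \<in> Delta J dhat k" and i: "i \<in> Jb"
  shows "\<exists>\<delta>'\<in>Delta J dhat (Suc k). (\<forall>j. \<delta> j \<le> \<delta>' j) \<and> dhat i \<le> \<delta>' i"
proof (cases "i \<in> J")
  case False
  then have "dhat i = 0" using i dhat_s dhat_t by (auto simp: Jb_cases)
  then show ?thesis using d Delta_mono[of k "Suc k"] delta_nn[OF d, of i] by auto
next
  case True
  obtain u where u: "\<forall>i\<in>J. u i \<in> {0, 1}" "(\<Sum>i\<in>J. u i) \<le> k"
    "\<delta> = (\<lambda>i. if i \<in> J then dhat i * real (u i) else 0)" using Delta_mem[OF d] by blast
  define u' where "u' = u(i := 1)"
  have u'1: "\<forall>i\<in>J. u' i \<in> {0, 1}" using u(1) by (auto simp: u'_def)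
  have "(\<Sum>j\<in>J. u' j) = (\<Sum>j\<in>J. u j) - u i + 1"
  proof -
    have "(\<Sum>j\<in>J. u' j) = u' i + (\<Sum>j\<in>J - {i}. u' j)" using True finJ by (simp add: sum.remove)
    also have "(\<Sum>j\<in>J - {i}. u' j) = (\<Sum>j\<in>J - {i}. u j)" by (auto simp: u'_def intro!: sum.cong)
    also have "(\<Sum>j\<in>J. u j) = u i + (\<Sum>j\<in>J - {i}. u j)" using True finJ by (simp add: sum.remove)
    ultimately show ?thesis by (simp add: u'_def)
  qed
  then have u'2: "(\<Sum>j\<in>J. u' j) \<le> Suc k" using u(2) by linarith
  define \<delta>' where "\<delta>' = (\<lambda>i. if i \<in> J then dhat i * real (u' i) else 0)"
  have "\<delta>' \<in> Delta J dhat (Suc k)" unfolding Delta_def \<delta>'_def using u'1 u'2 by blast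
  moreover have "\<forall>j. \<delta> j \<le> \<delta>' j"
  proof
    fix j show "\<delta> j \<le> \<delta>' j"
    proof (cases "j = i")
      case True
      then have "real (u i) \<le> 1" "0 \<le> dhat i" using u(1) dhat_nn \<open>i \<in> J\<close> by auto
      then have "dhat i * real (u i) \<le> dhat i" by (simp add: mult_left_le)
      then show ?thesis using True \<open>i \<in> J\<close> unfolding u(3) \<delta>'_def u'_def by simp
    qed (simp add: u(3) \<delta>'_def u'_def)
  qed
  moreover have "dhat i \<le> \<delta>' i" by (simp add: \<delta>'_def u'_def True)
  ultimately show ?thesis by blast
qed

lemma A_E:
  assumes fl: "flow_ok J s t A Res r R \<sigma> f"
  shows "A \<subseteq> EE \<sigma>"
proof
  fix e assume e: "e \<in> A"
  obtain a b where ab: "e = (a,b)" by force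
  have "a \<noteq> b" using acyc e ab unfolding acyclic_def by blast
  then have "e \<in> PP" using A_sub e ab by (auto simp: Ppairs_def)
  moreover have "\<sigma> e = 1" using fl e by (auto simp: flow_ok_def Let_def)
  ultimately show "e \<in> EE \<sigma>" by (simp add: E_P)
qed

lemma path_t:
  assumes fl: "flow_ok J s t A Res r R \<sigma> f" and i: "i \<in> Jb" "i \<noteq> t"
  shows "(i, t) \<in> (EE \<sigma>)\<^sup>+"
proof -
  have "(i,t) \<in> A\<^sup>*" using on_path i by blast
  then have "(i,t) \<in> (EE \<sigma>)\<^sup>*" using rtrancl_mono[OF A_E[OF fl]] by blast
  then show ?thesis using i(2) by (simp add: rtrancl_eq_or_trancl)
qed

lemma path_s:
  assumes fl: "flow_ok J s t A Res r R \<sigma> f" and i: "i \<in> Jb" "i \<noteq> s"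
  shows "(s, i) \<in> (EE \<sigma>)\<^sup>+"
proof -
  have "(s,i) \<in> A\<^sup>*" using on_path i by blast
  then have "(s,i) \<in> (EE \<sigma>)\<^sup>*" using rtrancl_mono[OF A_E[OF fl]] by blast
  then show ?thesis using i(2) by (simp add: rtrancl_eq_or_trancl)
qed

lemma fin_Sig: "finite (SigmaSet J s t A Res r R)"
proof -
  have "SigmaSet J s t A Res r R \<subseteq> (\<lambda>S e. if e \<in> S then (1::real) else 0) ` Pow PP"
  proof
    fix \<sigma> assume "\<sigma> \<in> SigmaSet J s t A Res r R"
    then have b: "binary_on PP \<sigma>" by (simp add: SigmaSet_def)
    have "\<sigma> = (\<lambda>e. if e \<in> {e\<in>PP. \<sigma> e = 1} then 1 else 0)"
      using b unfolding binary_on_def by fastforce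
    then show "\<sigma> \<in> (\<lambda>S e. if e \<in> S then (1::real) else 0) ` Pow PP" by blast
  qed
  then show ?thesis using P_fin finite_subset by blast
qed

lemma Q_nn: "0 \<le> Q_Gamma J s t p dhat \<Gamma> \<sigma>"
proof -
  have "0 \<le> Inf {ereal (x t) |x. is_schedule Jb (EE \<sigma>) (\<lambda>i. p i + (\<lambda>i. 0) i) x}"
    using t_in by (auto intro!: Inf_greatest simp: is_schedule_def)
  also have "\<dots> \<le> Q_Gamma J s t p dhat \<Gamma> \<sigma>"
    unfolding Q_Gamma_def by (rule SUP_upper[OF zero_Delta])
  finally show ?thesis .
qed

lemma Madj_nn: "0 \<le> M_adj J s t A Res r R p dhat \<Gamma>"
  unfolding M_adj_def by (auto intro!: INF_greatest Q_nn)

end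

context frame
begin

lemma feas_Sig:
  "Fadj_feasible J s t A Res r R p dhat \<Gamma> Mbar \<sigma> f x \<Longrightarrow> \<sigma> \<in> SigmaSet J s t A Res r R"
  by (auto simp: Fadj_feasible_def Let_def SigmaSet_def)

lemma LB:
  assumes fe: "Fadj_feasible J s t A Res r R p dhat \<Gamma> Mbar \<sigma> f x"
  shows "Q_Gamma J s t p dhat \<Gamma> \<sigma> \<le> ereal (x \<Gamma> t)"
proof -
  let ?E = "EE \<sigma>"
  have bin: "binary_on PP \<sigma>" and fl: "flow_ok J s t A Res r R \<sigma> f"
    and xnn: "\<And>\<gamma> j. \<gamma> \<le> \<Gamma> \<Longrightarrow> j \<in> Jb \<Longrightarrow> 0 \<le> x \<gamma> j"
    and c1: "\<And>i j \<gamma>. (i,j) \<in> PP \<Longrightarrow> \<gamma> \<le> \<Gamma> \<Longrightarrow> x \<gamma> j - x \<gamma> i \<ge> p i - Mbar * (1 - \<sigma> (i, j))"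
    and c2: "\<And>i j \<gamma>. (i,j) \<in> PP \<Longrightarrow> \<gamma> < \<Gamma> \<Longrightarrow> x \<gamma> j - x (Suc \<gamma>) i \<ge> p i + dhat i - Mbar * (1 - \<sigma> (i, j))"
    and c3: "\<And>\<gamma>. \<gamma> < \<Gamma> \<Longrightarrow> x \<Gamma> t - x \<gamma> t \<ge> 0"
    using fe unfolding Fadj_feasible_def Let_def by blast+
  define z where "z \<gamma> j = Max ((\<lambda>g. x g j) ` {\<gamma>..\<Gamma>})" for \<gamma> j
  have zin: "\<exists>g\<in>{\<gamma>..\<Gamma>}. z \<gamma> j = x g j" if "\<gamma> \<le> \<Gamma>" for \<gamma> j
  proof -
    have "z \<gamma> j \<in> (\<lambda>g. x g j) ` {\<gamma>..\<Gamma>}" unfolding z_def using that by (intro Max_in) auto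
    then show ?thesis by auto
  qed
  have zge: "x g j \<le> z \<gamma> j" if "\<gamma> \<le> g" "g \<le> \<Gamma>" for \<gamma> g j
    unfolding z_def using that by (intro Max_ge) auto
  have z1: "z \<gamma> i + p i \<le> z \<gamma> j" if h1: "(i,j) \<in> ?E" and h2: "\<gamma> \<le> \<Gamma>" for i j \<gamma>
  proof -
    obtain g where g: "g \<in> {\<gamma>..\<Gamma>}" "z \<gamma> i = x g i" using zin[OF h2] by blast
    have "(i,j) \<in> PP" "\<sigma> (i,j) = 1" using h1 by (auto simp: E_P)
    then have "x g i + p i \<le> x g j" using c1[of i j g] g by auto
    then show ?thesis using g zge[of \<gamma> g j] by auto
  qed
  have z2: "z (Suc \<gamma>) i + p i + dhat i \<le> z \<gamma> j" if h1: "(i,j) \<in> ?E" and h2: "\<gamma> < \<Gamma>" for i j \<gamma>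
  proof -
    obtain g where g: "g \<in> {Suc \<gamma>..\<Gamma>}" "z (Suc \<gamma>) i = x g i" using zin[of "Suc \<gamma>" i] h2 by auto
    obtain g' where g': "g = Suc g'" using g(1) by (cases g) auto
    have "(i,j) \<in> PP" "\<sigma> (i,j) = 1" using h1 by (auto simp: E_P)
    then have "x g i + p i + dhat i \<le> x g' j" using c2[of i j g'] g g' by auto
    then show ?thesis using g g' zge[of \<gamma> g' j] by auto
  qed
  have z3: "z \<gamma> t \<le> x \<Gamma> t" if h: "\<gamma> \<le> \<Gamma>" for \<gamma>
  proof -
    obtain g where g: "g \<in> {\<gamma>..\<Gamma>}" "z \<gamma> t = x g t" using zin[OF h] by blast
    show ?thesis using g c3[of g] by (cases "g = \<Gamma>") auto
  qed
  have z4: "0 \<le> z \<gamma> j" if "\<gamma> \<le> \<Gamma>" "j \<in> Jb" for \<gamma> j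
    using zge[of \<gamma> \<Gamma> j] xnn[of \<Gamma> j] that by auto
  have z5: "z \<gamma>' j \<le> z \<gamma> j" if h1: "\<gamma> \<le> \<gamma>'" and h2: "\<gamma>' \<le> \<Gamma>" for \<gamma> \<gamma>' j
  proof -
    obtain g where g: "g \<in> {\<gamma>'..\<Gamma>}" "z \<gamma>' j = x g j" using zin[OF h2] by blast
    show ?thesis using g zge[of \<gamma> g j] h1 h2 by auto
  qed
  have nocyc: "(i,i) \<notin> ?E\<^sup>+" if "i \<in> J" for i
  proof
    assume cyc: "(i,i) \<in> ?E\<^sup>+"
    have q1: "\<And>a b. (a,b) \<in> ?E \<Longrightarrow> z \<Gamma> a + p a \<le> z \<Gamma> b" using z1 by simp
    have q2: "\<And>a b. (a,b) \<in> ?E \<Longrightarrow> 0 \<le> p a" using E_sub p_nn by blast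
    have "z \<Gamma> i + p i \<le> z \<Gamma> i" by (rule chain_ge[of ?E "z \<Gamma>" p i i, OF q1 q2 cyc])
    then show False using p_pos that by force
  qed
  show ?thesis unfolding Q_Gamma_def
  proof (rule SUP_least)
    fix \<delta> assume d: "\<delta> \<in> Delta J dhat \<Gamma>"
    obtain u where u: "\<forall>i\<in>J. u i \<in> {0, 1}" "(\<Sum>i\<in>J. u i) \<le> \<Gamma>"
      "\<delta> = (\<lambda>i. if i \<in> J then dhat i * real (u i) else 0)" using Delta_mem[OF d] by blast
    define U where "U = {i\<in>J. u i = 1}"
    have Ufin: "finite U" using finJ U_def by auto
    have UJ: "U \<subseteq> J" by (auto simp: U_def)
    have "(\<Sum>i\<in>J. u i) = (\<Sum>i\<in>U. u i) + (\<Sum>i\<in>J - U. u i)"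
      using sum.subset_diff[OF UJ finJ, of u] by simp
    moreover have "(\<Sum>i\<in>J - U. u i) = 0"
      by (rule sum.neutral) (use u(1) in \<open>auto simp: U_def\<close>)
    moreover have "(\<Sum>i\<in>U. u i) = card U" by (simp add: U_def)
    ultimately have cardU: "card U \<le> \<Gamma>" using u(2) by linarith
    have dU: "\<delta> i = (if i \<in> U then dhat i else 0)" for i
      using u(1) unfolding u(3) U_def by auto
    define n where "n j = card {k\<in>U. (k,j) \<in> ?E\<^sup>+}" for j
    have n_le: "n j \<le> \<Gamma>" for j
      using cardU card_mono[OF Ufin, of "{k\<in>U. (k,j) \<in> ?E\<^sup>+}"] unfolding n_def by auto
    define y where "y j = z (\<Gamma> - n j) j" for j
    have ysch: "is_schedule Jb ?E (\<lambda>i. p i + \<delta> i) y"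
      unfolding is_schedule_def
    proof (intro conjI ballI)
      fix j assume "j \<in> Jb" then show "0 \<le> y j" unfolding y_def by (intro z4) auto
    next
      fix e assume e: "e \<in> ?E"
      obtain i j where ij: "e = (i,j)" by force
      have eij: "(i,j) \<in> ?E" using e ij by simp
      define Bi where "Bi = {k\<in>U. (k,i) \<in> ?E\<^sup>+}"
      define Bj where "Bj = {k\<in>U. (k,j) \<in> ?E\<^sup>+}"
      have ni: "n i = card Bi" and nj: "n j = card Bj" by (simp_all add: n_def Bi_def Bj_def)
      have yi: "y i = z (\<Gamma> - n i) i" and yj: "y j = z (\<Gamma> - n j) j" by (simp_all add: y_def)
      have sub1: "Bi \<subseteq> Bj"
      proof
        fix k assume "k \<in> Bi"
        then have "k \<in> U" "(k,i) \<in> ?E\<^sup>+" by (simp_all add: Bi_def)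
        then show "k \<in> Bj" using trancl_into_trancl[OF _ eij] by (simp add: Bj_def)
      qed
      have finj: "finite Bj" using Ufin by (simp add: Bj_def)
      have fini: "finite Bi" using Ufin by (simp add: Bi_def)
      have nij: "n i \<le> n j" unfolding ni nj by (rule card_mono[OF finj sub1])
      have nle: "n i \<le> \<Gamma>" "n j \<le> \<Gamma>" by (rule n_le)+
      have "p i + \<delta> i \<le> y j - y i"
      proof (cases "i \<in> U")
        case False
        have a: "z (\<Gamma> - n j) i + p i \<le> z (\<Gamma> - n j) j" by (rule z1[OF eij diff_le_self])
        have b: "z (\<Gamma> - n i) i \<le> z (\<Gamma> - n j) i" by (rule z5) (use nij nle in linarith)+
        have c: "\<delta> i = 0" using False dU[of i] by simp
        show ?thesis using a b c yi yj by linarith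
      next
        case True
        have iJ: "i \<in> J" using True UJ by blast
        have ins: "insert i Bi \<subseteq> Bj"
          using sub1 True r_into_trancl[OF eij] by (simp add: Bj_def)
        have notin: "i \<notin> Bi" using nocyc[OF iJ] by (simp add: Bi_def)
        have "card (insert i Bi) = Suc (card Bi)" by (rule card_insert_disjoint[OF fini notin])
        moreover have "card (insert i Bi) \<le> card Bj" by (rule card_mono[OF finj ins])
        ultimately have sn: "Suc (n i) \<le> n j" unfolding ni nj by linarith
        have lt1: "\<Gamma> - n j < \<Gamma>" using sn nle by linarith
        have lt2: "Suc (\<Gamma> - n j) \<le> \<Gamma> - n i" using sn nle by linarith
        have a: "z (Suc (\<Gamma> - n j)) i + p i + dhat i \<le> z (\<Gamma> - n j) j" by (rule z2[OF eij lt1])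
        have b: "z (\<Gamma> - n i) i \<le> z (Suc (\<Gamma> - n j)) i" by (rule z5[OF lt2]) linarith
        have c: "\<delta> i = dhat i" using True dU[of i] by simp
        show ?thesis using a b c yi yj by linarith
      qed
      then show "case e of (i, j) \<Rightarrow> p i + \<delta> i \<le> y j - y i" using ij by simp
    qed
    have "y t \<le> x \<Gamma> t" unfolding y_def by (intro z3) auto
    then have "Inf {ereal (x t) |x. is_schedule Jb ?E (\<lambda>i. p i + \<delta> i) x} \<le> ereal (x \<Gamma> t)"
      using ysch by (intro Inf_lower2[of "ereal (y t)"]) auto
    then show "Inf {ereal (x t) |x. is_schedule Jb ?E (\<lambda>i. p i + \<delta> i) x} \<le> ereal (x \<Gamma> t)" .
  qed
qed

end

context frame
begin

lemma UB:
  assumes sig: "\<sigma> \<in> SigmaSet J s t A Res r R"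
    and Qe: "Q_Gamma J s t p dhat \<Gamma> \<sigma> = ereal Qr" and QM: "Qr \<le> Mbar" and Jne: "J \<noteq> {}"
  shows "\<exists>f x. Fadj_feasible J s t A Res r R p dhat \<Gamma> Mbar \<sigma> f x \<and> x \<Gamma> t = Qr"
proof -
  let ?E = "EE \<sigma>"
  obtain f where fl: "flow_ok J s t A Res r R \<sigma> f" and bin: "binary_on PP \<sigma>"
    using sig by (auto simp: SigmaSet_def)
  define ES' where "ES' \<delta> = ES Jb ?E (\<lambda>i. p i + \<delta> i)" for \<delta> :: "'a \<Rightarrow> real"
  have schex: "\<exists>x. is_schedule Jb ?E (\<lambda>i. p i + \<delta> i) x" if d: "\<delta> \<in> Delta J dhat \<Gamma>" for \<delta>
  proof (rule ccontr)
    assume "\<nexists>x. is_schedule Jb ?E (\<lambda>i. p i + \<delta> i) x"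
    then have "{ereal (x t) |x. is_schedule Jb ?E (\<lambda>i. p i + \<delta> i) x} = {}" by simp
    then have i1: "Inf {ereal (x t) |x. is_schedule Jb ?E (\<lambda>i. p i + \<delta> i) x} = top" by simp
    have "Inf {ereal (x t) |x. is_schedule Jb ?E (\<lambda>i. p i + \<delta> i) x} \<le> Q_Gamma J s t p dhat \<Gamma> \<sigma>"
      unfolding Q_Gamma_def by (rule SUP_upper[OF d])
    then have "top \<le> ereal Qr" using Qe i1 by simp
    then show False by (simp add: top_ereal_def)
  qed
  have sch: "is_schedule Jb ?E (\<lambda>i. p i + \<delta> i) (ES' \<delta>)" if d: "\<delta> \<in> Delta J dhat \<Gamma>" for \<delta>
    unfolding ES'_def by (rule ES_sched[OF E_sub schex[OF d]])
  have ESle: "ES' \<delta> j \<le> y j" if "j \<in> Jb" "is_schedule Jb ?E (\<lambda>i. p i + \<delta> i) y" for \<delta> j y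
    unfolding ES'_def by (rule ES_le[OF that])
  have ES_t: "ES' \<delta> t \<le> Qr" if d: "\<delta> \<in> Delta J dhat \<Gamma>" for \<delta>
  proof -
    have "ereal (ES' \<delta> t) = Inf {ereal (x t) |x. is_schedule Jb ?E (\<lambda>i. p i + \<delta> i) x}"
      unfolding ES'_def using ES_ereal[OF E_sub schex[OF d] t_in] by simp
    also have "\<dots> \<le> Q_Gamma J s t p dhat \<Gamma> \<sigma>" unfolding Q_Gamma_def by (rule SUP_upper[OF d])
    finally show ?thesis using Qe by simp
  qed
  have ES_nn: "0 \<le> ES' \<delta> j" if "\<delta> \<in> Delta J dhat \<Gamma>" "j \<in> Jb" for \<delta> j
    using sch[OF that(1)] that(2) unfolding is_schedule_def by blast
  have ES_edge: "ES' \<delta> i + p i + \<delta> i \<le> ES' \<delta> j" if h1: "\<delta> \<in> Delta J dhat \<Gamma>" and h2: "(i,j) \<in> ?E" for \<delta> i j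
  proof -
    have "\<forall>(a,b)\<in>?E. p a + \<delta> a \<le> ES' \<delta> b - ES' \<delta> a"
      using sch[OF h1] by (simp add: is_schedule_def)
    then have "p i + \<delta> i \<le> ES' \<delta> j - ES' \<delta> i" using h2 by blast
    then show ?thesis by linarith
  qed
  have ES_path: "ES' \<delta> i + (p i + \<delta> i) \<le> ES' \<delta> j" if d: "\<delta> \<in> Delta J dhat \<Gamma>" and ij: "(i,j) \<in> ?E\<^sup>+" for \<delta> i j
  proof -
    have q1: "\<And>a b. (a,b) \<in> ?E \<Longrightarrow> ES' \<delta> a + (p a + \<delta> a) \<le> ES' \<delta> b"
      using ES_edge[OF d] by (simp add: add.assoc)
    have q2: "0 \<le> p a + \<delta> a" if ab: "(a,b) \<in> ?E" for a b
    proof -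
      have "a \<in> Jb" using E_sub ab by blast
      then show ?thesis using p_nn[of a] delta_nn[OF d, of a] by linarith
    qed
    show ?thesis by (rule chain_ge[of ?E "ES' \<delta>" "\<lambda>a. p a + \<delta> a" i j, OF q1 q2 ij])
  qed
  have ES_Q: "ES' \<delta> i + p i + \<delta> i \<le> Qr" if d: "\<delta> \<in> Delta J dhat \<Gamma>" and i: "i \<in> Jb" for \<delta> i
  proof (cases "i = t")
    case True then show ?thesis using ES_t[OF d] p_t delta_st[OF d] by simp
  next
    case False
    then show ?thesis using ES_path[OF d path_t[OF fl i False]] ES_t[OF d] by simp
  qed
  have ES_mono: "ES' \<delta> j \<le> ES' \<delta>' j" if d: "\<delta> \<in> Delta J dhat \<Gamma>" and d': "\<delta>' \<in> Delta J dhat \<Gamma>"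
    and le: "\<forall>k. \<delta> k \<le> \<delta>' k" and j: "j \<in> Jb" for \<delta> \<delta>' j
  proof -
    have h: "\<forall>j\<in>Jb. 0 \<le> ES' \<delta>' j" using sch[OF d'] by (simp add: is_schedule_def)
    have "\<forall>(a,b)\<in>?E. p a + \<delta> a \<le> ES' \<delta>' b - ES' \<delta>' a"
    proof (intro ballI, clarify)
      fix a b assume "(a,b) \<in> ?E"
      then have "ES' \<delta>' a + p a + \<delta>' a \<le> ES' \<delta>' b" by (rule ES_edge[OF d'])
      moreover have "\<delta> a \<le> \<delta>' a" using le by blast
      ultimately show "p a + \<delta> a \<le> ES' \<delta>' b - ES' \<delta>' a" by linarith
    qed
    then have "is_schedule Jb ?E (\<lambda>i. p i + \<delta> i) (ES' \<delta>')"
      using h unfolding is_schedule_def by blast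
    then show ?thesis using ESle[OF j] by blast
  qed
  define Lay where "Lay k j = Sup {ES' \<delta> j | \<delta>. \<delta> \<in> Delta J dhat k}" for k j
  have Lay_ub: "ES' \<delta> j \<le> Lay k j" if k: "k \<le> \<Gamma>" and j: "j \<in> Jb" and d: "\<delta> \<in> Delta J dhat k" for k j \<delta>
  proof -
    have "bdd_above {ES' \<delta> j | \<delta>. \<delta> \<in> Delta J dhat k}"
    proof (rule bdd_aboveI)
      fix v assume "v \<in> {ES' \<delta> j | \<delta>. \<delta> \<in> Delta J dhat k}"
      then obtain \<delta>1 where "\<delta>1 \<in> Delta J dhat k" "v = ES' \<delta>1 j" by blast
      moreover then have d1: "\<delta>1 \<in> Delta J dhat \<Gamma>" using Delta_mono[OF k] by blast
      ultimately show "v \<le> Qr" using ES_Q[OF d1 j] p_nn[OF j] delta_nn[OF d1, of j] by linarith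
    qed
    then show ?thesis unfolding Lay_def using d by (auto intro!: cSup_upper)
  qed
  have Lay_least: "Lay k j \<le> c" if "\<And>\<delta>. \<delta> \<in> Delta J dhat k \<Longrightarrow> ES' \<delta> j \<le> c" for k j c
    unfolding Lay_def using that zero_Delta by (auto intro!: cSup_least)
  have Lay_nn: "0 \<le> Lay k j" if "k \<le> \<Gamma>" "j \<in> Jb" for k j
    using Lay_ub[OF that zero_Delta] ES_nn[OF zero_Delta that(2)] by linarith
  have Lay_Q: "Lay k j + p j \<le> Qr" if k: "k \<le> \<Gamma>" and j: "j \<in> Jb" for k j
  proof -
    have "Lay k j \<le> Qr - p j"
    proof (rule Lay_least)
      fix \<delta> assume "\<delta> \<in> Delta J dhat k"
      then have d: "\<delta> \<in> Delta J dhat \<Gamma>" using Delta_mono[OF k] by blast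
      show "ES' \<delta> j \<le> Qr - p j" using ES_Q[OF d j] delta_nn[OF d, of j] by linarith
    qed
    then show ?thesis by linarith
  qed
  have Lay_Q2: "Lay k j + p j + dhat j \<le> Qr" if k: "k < \<Gamma>" and j: "j \<in> Jb" for k j
  proof -
    have "Lay k j \<le> Qr - p j - dhat j"
    proof (rule Lay_least)
      fix \<delta> assume dk: "\<delta> \<in> Delta J dhat k"
      then have d: "\<delta> \<in> Delta J dhat \<Gamma>" using Delta_mono[of k \<Gamma>] k by auto
      obtain \<delta>' where d': "\<delta>' \<in> Delta J dhat (Suc k)" "\<forall>i. \<delta> i \<le> \<delta>' i" "dhat j \<le> \<delta>' j"
        using bump[OF dk j] by blast
      have d'G: "\<delta>' \<in> Delta J dhat \<Gamma>" using d'(1) Delta_mono[of "Suc k" \<Gamma>] k by auto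
      show "ES' \<delta> j \<le> Qr - p j - dhat j"
        using ES_mono[OF d d'G d'(2) j] ES_Q[OF d'G j] d'(3) by linarith
    qed
    then show ?thesis by linarith
  qed
  have noout: "(t,j) \<notin> ?E" for j
  proof
    assume tj: "(t,j) \<in> ?E"
    obtain j0 where j0: "j0 \<in> J" using Jne by blast
    have tjP: "(t,j) \<in> PP" using tj by (simp add: E_P)
    then have jJb: "j \<in> Jb" and jt: "j \<noteq> t" unfolding Ppairs_def by auto
    have "\<exists>i\<in>J. (i,i) \<in> ?E\<^sup>+"
    proof (cases "j \<in> J")
      case True
      have "(j,t) \<in> ?E\<^sup>+" using path_t[OF fl jJb jt] .
      then have "(j,j) \<in> ?E\<^sup>+" using tj by (rule trancl_into_trancl)
      then show ?thesis using True by blast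
    next
      case False
      then have js: "j = s" using jJb jt by (auto simp: Jb_cases)
      have j0Jb: "j0 \<in> Jb" using j0 by (simp add: Jb_cases)
      have "(j0,t) \<in> ?E\<^sup>+" using path_t[OF fl j0Jb] j0 tJ by blast
      then have "(j0,s) \<in> ?E\<^sup>+" using tj js by (metis trancl_into_trancl)
      moreover have "(s,j0) \<in> ?E\<^sup>+" using path_s[OF fl j0Jb] j0 sJ by blast
      ultimately have "(j0,j0) \<in> ?E\<^sup>+" by (rule trancl_trans)
      then show ?thesis using j0 by blast
    qed
    then obtain i where i: "i \<in> J" "(i,i) \<in> ?E\<^sup>+" by blast
    have "ES' (\<lambda>i. 0) i + (p i + 0) \<le> ES' (\<lambda>i. 0) i"
      using ES_path[OF zero_Delta i(2)] by simp
    then show False using p_pos i(1) by force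
  qed
  define x where "x \<gamma> j = (if \<gamma> = \<Gamma> \<and> j = t then Qr else Lay (\<Gamma> - \<gamma>) j)" for \<gamma> j
  have Qnn: "0 \<le> Qr" using ES_nn[OF zero_Delta t_in] ES_t[OF zero_Delta] by linarith
  have Mnn: "0 \<le> Mbar" using Qnn QM by linarith
  have xnn: "0 \<le> x \<gamma> j" if "\<gamma> \<le> \<Gamma>" "j \<in> Jb" for \<gamma> j
    using Qnn Lay_nn[of "\<Gamma> - \<gamma>" j] that unfolding x_def by auto
  have xQ: "x \<gamma> i + p i \<le> Qr" if "\<gamma> \<le> \<Gamma>" "i \<in> Jb" for \<gamma> i
    using Lay_Q[of "\<Gamma> - \<gamma>" i] that p_t unfolding x_def by auto
  have xQ2: "x (Suc \<gamma>) i + p i + dhat i \<le> Qr" if "\<gamma> < \<Gamma>" "i \<in> Jb" for \<gamma> i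
    using Lay_Q2[of "\<Gamma> - Suc \<gamma>" i] that p_t dhat_t unfolding x_def by auto
  have sig01: "\<sigma> e = 0 \<or> \<sigma> e = 1" if "e \<in> PP" for e
    using bin that unfolding binary_on_def by auto
  have c1: "x \<gamma> j - x \<gamma> i \<ge> p i - Mbar * (1 - \<sigma> (i, j))" if ij: "(i,j) \<in> PP" and g: "\<gamma> \<le> \<Gamma>" for i j \<gamma>
  proof -
    have iJ: "i \<in> Jb" "j \<in> Jb" "i \<noteq> j" using ij by (auto simp: Ppairs_def)
    show ?thesis
    proof (cases "\<sigma> (i,j) = 1")
      case False
      then have "\<sigma> (i,j) = 0" using sig01[OF ij] by auto
      then show ?thesis using xnn[OF g iJ(2)] xQ[OF g iJ(1)] QM by simp
    next
      case True
      then have e: "(i,j) \<in> ?E" using ij by (simp add: E_P)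
      have xi: "x \<gamma> i = Lay (\<Gamma> - \<gamma>) i" using noout e unfolding x_def by auto
      have "x \<gamma> i + p i \<le> x \<gamma> j"
      proof (cases "\<gamma> = \<Gamma> \<and> j = t")
        case True
        then show ?thesis using xQ[OF g iJ(1)] unfolding x_def by auto
      next
        case False
        then have xj: "x \<gamma> j = Lay (\<Gamma> - \<gamma>) j" unfolding x_def by auto
        have "Lay (\<Gamma> - \<gamma>) i \<le> Lay (\<Gamma> - \<gamma>) j - p i"
        proof (rule Lay_least)
          fix \<delta> assume dk: "\<delta> \<in> Delta J dhat (\<Gamma> - \<gamma>)"
          then have d: "\<delta> \<in> Delta J dhat \<Gamma>" using Delta_mono[of "\<Gamma> - \<gamma>" \<Gamma>] by auto
          have "\<Gamma> - \<gamma> \<le> \<Gamma>" by simp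
          note l = Lay_ub[OF this iJ(2) dk]
          show "ES' \<delta> i \<le> Lay (\<Gamma> - \<gamma>) j - p i"
            using ES_edge[OF d e] delta_nn[OF d, of i] l by linarith
        qed
        then show ?thesis using xi xj by linarith
      qed
      then show ?thesis using True by simp
    qed
  qed
  have c2: "x \<gamma> j - x (Suc \<gamma>) i \<ge> p i + dhat i - Mbar * (1 - \<sigma> (i, j))" if ij: "(i,j) \<in> PP" and g: "\<gamma> < \<Gamma>" for i j \<gamma>
  proof -
    have iJ: "i \<in> Jb" "j \<in> Jb" "i \<noteq> j" using ij by (auto simp: Ppairs_def)
    show ?thesis
    proof (cases "\<sigma> (i,j) = 1")
      case False
      then have "\<sigma> (i,j) = 0" using sig01[OF ij] by auto
      then show ?thesis using xnn[of \<gamma> j] g iJ(2) xQ2[OF g iJ(1)] QM by simp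
    next
      case True
      then have e: "(i,j) \<in> ?E" using ij by (simp add: E_P)
      have xi: "x (Suc \<gamma>) i = Lay (\<Gamma> - Suc \<gamma>) i" using noout e unfolding x_def by auto
      have xj: "x \<gamma> j = Lay (\<Gamma> - \<gamma>) j" using g unfolding x_def by auto
      have SS: "Suc (\<Gamma> - Suc \<gamma>) = \<Gamma> - \<gamma>" using g by simp
      have "Lay (\<Gamma> - Suc \<gamma>) i \<le> Lay (\<Gamma> - \<gamma>) j - p i - dhat i"
      proof (rule Lay_least)
        fix \<delta> assume dk: "\<delta> \<in> Delta J dhat (\<Gamma> - Suc \<gamma>)"
        then have d: "\<delta> \<in> Delta J dhat \<Gamma>" using Delta_mono[of "\<Gamma> - Suc \<gamma>" \<Gamma>] by auto
        obtain \<delta>' where d': "\<delta>' \<in> Delta J dhat (Suc (\<Gamma> - Suc \<gamma>))" "\<forall>k. \<delta> k \<le> \<delta>' k" "dhat i \<le> \<delta>' i"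
          using bump[OF dk iJ(1)] by blast
        have d'k: "\<delta>' \<in> Delta J dhat (\<Gamma> - \<gamma>)" using d'(1) SS by simp
        have d'G: "\<delta>' \<in> Delta J dhat \<Gamma>" using d'k Delta_mono[of "\<Gamma> - \<gamma>" \<Gamma>] by auto
        have "\<Gamma> - \<gamma> \<le> \<Gamma>" by simp
        note l = Lay_ub[OF this iJ(2) d'k]
        show "ES' \<delta> i \<le> Lay (\<Gamma> - \<gamma>) j - p i - dhat i"
          using ES_mono[OF d d'G d'(2) iJ(1)] ES_edge[OF d'G e] d'(3) l by linarith
      qed
      then show ?thesis using xi xj True by simp
    qed
  qed
  have c3: "x \<Gamma> t - x \<gamma> t \<ge> 0" if g: "\<gamma> < \<Gamma>" for \<gamma>
    using xQ[of \<gamma> t] g t_in p_t unfolding x_def by auto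
  have "Fadj_feasible J s t A Res r R p dhat \<Gamma> Mbar \<sigma> f x"
    unfolding Fadj_feasible_def Let_def
  proof (intro conjI bin fl)
    show "\<forall>\<gamma>\<le>\<Gamma>. \<forall>j\<in>Jb. 0 \<le> x \<gamma> j" using xnn by blast
    show "\<forall>(i, j)\<in>PP. \<forall>\<gamma>\<le>\<Gamma>. p i - Mbar * (1 - \<sigma> (i, j)) \<le> x \<gamma> j - x \<gamma> i" using c1 by blast
    show "\<forall>(i, j)\<in>PP. \<forall>\<gamma><\<Gamma>. p i + dhat i - Mbar * (1 - \<sigma> (i, j)) \<le> x \<gamma> j - x (Suc \<gamma>) i" using c2 by blast
    show "\<forall>\<gamma><\<Gamma>. 0 \<le> x \<Gamma> t - x \<gamma> t" using c3 by blast
  qed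
  moreover have "x \<Gamma> t = Qr" by (simp add: x_def)
  ultimately show ?thesis by blast
qed

end

theorem theorem4:
  fixes J :: "'a set" and s t :: 'a and A :: "('a \<times> 'a) set"
    and Res :: "'r set" and r :: "'a \<Rightarrow> 'r \<Rightarrow> real" and R :: "'r \<Rightarrow> real"
    and p dhat :: "'a \<Rightarrow> real" and \<Gamma> :: nat and Mbar :: real
  assumes finJ: "finite J" and finRes: "finite Res"
    and sJ: "s \<notin> J" and tJ: "t \<notin> J" and st: "s \<noteq> t"
    and A_sub: "A \<subseteq> Jbar J s t \<times> Jbar J s t"
    and acyc: "acyclic A"
    and source: "\<forall>j\<in>Jbar J s t. (\<nexists>i. (i, j) \<in> A) \<longleftrightarrow> j = s"
    and sink: "\<forall>i\<in>Jbar J s t. (\<nexists>j. (i, j) \<in> A) \<longleftrightarrow> i = t"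
    and on_path: "\<forall>j\<in>Jbar J s t. (s, j) \<in> A\<^sup>* \<and> (j, t) \<in> A\<^sup>*"
    and p_pos: "\<forall>i\<in>J. p i > 0" and p_s: "p s = 0" and p_t: "p t = 0"
    and dhat_nn: "\<forall>i\<in>J. dhat i \<ge> 0" and dhat_s: "dhat s = 0" and dhat_t: "dhat t = 0"
    and r_nn: "\<forall>i\<in>J. \<forall>k\<in>Res. r i k \<ge> 0" and R_nn: "\<forall>k\<in>Res. R k \<ge> 0"
    and Mbar_ub: "M_adj J s t A Res r R p dhat \<Gamma> \<le> ereal Mbar"
  shows "(INF (\<sigma>, f, x)\<in>{(\<sigma>, f, x). Fadj_feasible J s t A Res r R p dhat \<Gamma> Mbar \<sigma> f x}.
            ereal (x \<Gamma> t)) = M_adj J s t A Res r R p dhat \<Gamma>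
       \<and> (\<forall>\<sigma> f x. Fadj_feasible J s t A Res r R p dhat \<Gamma> Mbar \<sigma> f x
            \<and> (\<forall>\<sigma>' f' x'. Fadj_feasible J s t A Res r R p dhat \<Gamma> Mbar \<sigma>' f' x' \<longrightarrow> x \<Gamma> t \<le> x' \<Gamma> t)
            \<longrightarrow> Q_Gamma J s t p dhat \<Gamma> \<sigma> = M_adj J s t A Res r R p dhat \<Gamma>)"
proof -
  interpret frame J s t A Res r R p dhat \<Gamma> Mbar
    using finJ sJ tJ st A_sub acyc on_path p_pos p_s p_t dhat_nn dhat_s dhat_t
    by unfold_locales blast+
  let ?F = "{(\<sigma>, f, x). Fadj_feasible J s t A Res r R p dhat \<Gamma> Mbar \<sigma> f x}"
  let ?I = "INF (\<sigma>, f, x)\<in>?F. ereal (x \<Gamma> t)"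
  let ?M = "M_adj J s t A Res r R p dhat \<Gamma>"
  have lb: "?M \<le> ereal (x \<Gamma> t)" if "Fadj_feasible J s t A Res r R p dhat \<Gamma> Mbar \<sigma> f x" for \<sigma> f x
  proof -
    have "?M \<le> Q_Gamma J s t p dhat \<Gamma> \<sigma>"
      unfolding M_adj_def by (rule INF_lower[OF feas_Sig[OF that]])
    also have "\<dots> \<le> ereal (x \<Gamma> t)" by (rule LB[OF that])
    finally show ?thesis .
  qed
  have ge: "?M \<le> ?I"
  proof (rule INF_greatest)
    fix y assume "y \<in> ?F"
    then obtain \<sigma> f x where y: "y = (\<sigma>, f, x)" "Fadj_feasible J s t A Res r R p dhat \<Gamma> Mbar \<sigma> f x"
      by blast
    show "?M \<le> (case y of (\<sigma>, f, x) \<Rightarrow> ereal (x \<Gamma> t))" using lb[OF y(2)] y(1) by simp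
  qed
  have le: "?I \<le> ?M"
  proof (cases "?M = \<infinity>")
    case True then show ?thesis by simp
  next
    case False
    let ?S = "SigmaSet J s t A Res r R"
    have Sne: "?S \<noteq> {}"
    proof
      assume "?S = {}" then have "?M = \<infinity>" unfolding M_adj_def by (simp add: top_ereal_def)
      then show False using False by simp
    qed
    show ?thesis
    proof (cases "J = {}")
      case True
      obtain \<sigma> where sig: "\<sigma> \<in> ?S" using Sne by blast
      obtain f where fl: "flow_ok J s t A Res r R \<sigma> f" and bin: "binary_on PP \<sigma>"
        using sig by (auto simp: SigmaSet_def)
      have JbE: "Jb = {s, t}" using True by (simp add: Jbar_def)
      have "0 \<le> ereal Mbar" using Madj_nn Mbar_ub by (rule order_trans)
      then have Mnn: "0 \<le> Mbar" by simp
      have pz: "p i = 0" "dhat i = 0" if "i \<in> Jb" for i using that JbE p_s p_t dhat_s dhat_t by auto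
      have s01: "0 \<le> 1 - \<sigma> e" if "e \<in> PP" for e
        using bin that unfolding binary_on_def by auto
      have c1: "(0::real) - 0 \<ge> p i - Mbar * (1 - \<sigma> (i, j))" if ij: "(i,j) \<in> PP" for i j
      proof -
        have i: "i \<in> Jb" using ij by (auto simp: Ppairs_def)
        have "0 \<le> Mbar * (1 - \<sigma> (i,j))" using Mnn s01[OF ij] by simp
        then show ?thesis using pz[OF i] by simp
      qed
      have c2: "(0::real) - 0 \<ge> p i + dhat i - Mbar * (1 - \<sigma> (i, j))" if ij: "(i,j) \<in> PP" for i j
      proof -
        have i: "i \<in> Jb" using ij by (auto simp: Ppairs_def)
        have "0 \<le> Mbar * (1 - \<sigma> (i,j))" using Mnn s01[OF ij] by simp
        then show ?thesis using pz[OF i] by simp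
      qed
      have "Fadj_feasible J s t A Res r R p dhat \<Gamma> Mbar \<sigma> f (\<lambda>_ _. 0)"
        unfolding Fadj_feasible_def Let_def using bin fl c1 c2 by auto
      then have "(\<sigma>, f, \<lambda>_ _. 0) \<in> ?F" by simp
      then have "?I \<le> ereal 0" by (rule INF_lower2) simp
      also have "\<dots> \<le> ?M" using Madj_nn by (simp add: zero_ereal_def)
      finally show ?thesis .
    next
      case Jne: False
      define \<sigma> where "\<sigma> = arg_min_on (Q_Gamma J s t p dhat \<Gamma>) ?S"
      have sig: "\<sigma> \<in> ?S" unfolding \<sigma>_def by (rule arg_min_if_finite(1)[OF fin_Sig Sne])
      have "Q_Gamma J s t p dhat \<Gamma> \<sigma> \<le> ?M" unfolding M_adj_def \<sigma>_def
        by (rule INF_greatest) (rule arg_min_least[OF fin_Sig Sne])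
      then have Qeq: "Q_Gamma J s t p dhat \<Gamma> \<sigma> = ?M"
        using INF_lower[OF sig, of "Q_Gamma J s t p dhat \<Gamma>"] unfolding M_adj_def by simp
      obtain Qr where Qr: "?M = ereal Qr"
        using False Madj_nn by (cases "?M") auto
      have QM: "Qr \<le> Mbar" using Mbar_ub Qr by simp
      have Qe: "Q_Gamma J s t p dhat \<Gamma> \<sigma> = ereal Qr" using Qeq Qr by simp
      obtain f x where fx: "Fadj_feasible J s t A Res r R p dhat \<Gamma> Mbar \<sigma> f x" "x \<Gamma> t = Qr"
        using UB[OF sig Qe QM Jne] by blast
      have "(\<sigma>, f, x) \<in> ?F" using fx(1) by simp
      then have "?I \<le> ereal (x \<Gamma> t)" by (rule INF_lower2) simp
      then show ?thesis using fx(2) Qr by simp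
    qed
  qed
  have eq: "?I = ?M" using ge le by (rule antisym[rotated])
  show ?thesis
  proof (intro conjI eq allI impI, elim conjE)
    fix \<sigma> f x
    assume fe: "Fadj_feasible J s t A Res r R p dhat \<Gamma> Mbar \<sigma> f x"
      and opt: "\<forall>\<sigma>' f' x'. Fadj_feasible J s t A Res r R p dhat \<Gamma> Mbar \<sigma>' f' x' \<longrightarrow> x \<Gamma> t \<le> x' \<Gamma> t"
    have "ereal (x \<Gamma> t) \<le> ?I"
    proof (rule INF_greatest)
      fix y assume "y \<in> ?F"
      then obtain \<sigma>' f' x' where y: "y = (\<sigma>', f', x')" "Fadj_feasible J s t A Res r R p dhat \<Gamma> Mbar \<sigma>' f' x'"
        by blast
      show "ereal (x \<Gamma> t) \<le> (case y of (\<sigma>, f, x) \<Rightarrow> ereal (x \<Gamma> t))" using opt y by simp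
    qed
    then have "Q_Gamma J s t p dhat \<Gamma> \<sigma> \<le> ?M" using LB[OF fe] eq by simp
    moreover have "?M \<le> Q_Gamma J s t p dhat \<Gamma> \<sigma>"
      unfolding M_adj_def by (rule INF_lower[OF feas_Sig[OF fe]])
    ultimately show "Q_Gamma J s t p dhat \<Gamma> \<sigma> = ?M" by (rule antisym)
  qed
qed

end
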